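(* Let $\mathcal{D}(\rho)=(1-p)\rho+pX\rho X$ be a bit-flip channel and $\mathcal{E}(\rho)=(1-q)\rho+qZ\rho Z$ a phase-flip channel, $p,q\in[0,1]$. The entanglement-assisted classical communication capacity over a quantum trajectory is $$C_{\text{E,Q}}=2+H(\alpha)+(1-p)(1-q)\log_2[(1-p)(1-q)]+p(1-q)\log_2[p(1-q)]+(1-p)q\log_2[(1-p)q]+pq\log_2(pq),$$ where $\alpha=1-pq$ and $H(\alpha)=-\alpha\log_2\alpha-(1-\alpha)\log_2(1-\alpha)$.
   Context: $X,Y,Z$ are Pauli matrices, $\sigma_0=I,\sigma_1=X,\sigma_2=Y,\sigma_3=Z$, $|\pm\rangle=(|0\rangle\pm|1\rangle)/\sqrt2$, $0\log_2 0=0$. For a Pauli channel $\mathcal{N}(\rho)=\sum_i r_i\sigma_i\rho\sigma_i$, the entanglement-assisted classical capacity (superdense coding, pre-shared EPR pair, equiprobable inputs) is $C_E(\mathcal{N})=2+\sum_i r_i\log_2 r_i$. Quantum trajectory: given Kraus operators $\{D_i\}$ of $\mathcal{D}$ and $\{E_j\}$ of $\mathcal{E}$ (here multiples of Pauli matrices), the switched channel on data $\rho$ and control $\omega=|+\rangle\langle+|$ is $\sum_{i,j}W_{i,j}(\rho\otimes\omega)W_{i,j}^\dagger$ with $W_{i,j}=E_jD_i\otimes|0\rangle\langle0|+D_iE_j\otimes|1\rangle\langle1|$. Its output has the form $p_+\mathcal{S}_+(\rho)\otimes|+\rangle\langle+|+p_-\mathcal{S}_-(\rho)\otimes|-\rangle\langle-|$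 (commuting Kraus pairs go to the $|+\rangle$ branch, anticommuting pairs to the $|-\rangle$ branch), with $\mathcal{S}_\pm$ normalized Pauli channels; the capacity is defined as $C_{\text{E,Q}}=p_+C_E(\mathcal{S}_+)+p_-C_E(\mathcal{S}_-)$. *)

theory Defs
  imports Complex_Main "Jordan_Normal_Form.Matrix"
begin

fun pauli :: "nat \<Rightarrow> complex mat" where
  "pauli 0 = mat_of_rows_list 2 [[1, 0], [0, 1]]"
| "pauli (Suc 0) = mat_of_rows_list 2 [[0, 1], [1, 0]]"
| "pauli (Suc (Suc 0)) = mat_of_rows_list 2 [[0, - \<i>], [\<i>, 0]]"
| "pauli _ = mat_of_rows_list 2 [[1, 0], [0, -1]]"

definition mat_trace2 :: "complex mat \<Rightarrow> complex" where
  "mat_trace2 K = K $$ (0,0) + K $$ (1,1)"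

definition bitflip_kraus :: "real \<Rightarrow> complex mat list" where
  "bitflip_kraus p = [complex_of_real (sqrt (1 - p)) \<cdot>\<^sub>m pauli 0,
                      complex_of_real (sqrt p) \<cdot>\<^sub>m pauli 1]"

definition phaseflip_kraus :: "real \<Rightarrow> complex mat list" where
  "phaseflip_kraus q = [complex_of_real (sqrt (1 - q)) \<cdot>\<^sub>m pauli 0,
                        complex_of_real (sqrt q) \<cdot>\<^sub>m pauli 3]"

(* Data-space Kraus operators of the quantum trajectory, projected on control |+> (s = 1)
   or |-> (s = -1): with W_ij = E_j D_i (x) |0><0| + D_i E_j (x) |1><1| and control |+>,
   the |+-> component is (E_j D_i +- D_i E_j)/2 (times an overall 1/sqrt 2 * sqrt 2 = 1). *)
definition branch_kraus :: "complex \<Rightarrow> complex mat list \<Rightarrow> complex mat list \<Rightarrow> complex mat list" where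
  "branch_kraus s Ds Es = [(1/2) \<cdot>\<^sub>m (E * D + s \<cdot>\<^sub>m (D * E)). D \<leftarrow> Ds, E \<leftarrow> Es]"

definition pauli_coeff :: "nat \<Rightarrow> complex mat \<Rightarrow> complex" where
  "pauli_coeff c K = mat_trace2 (pauli c * K) / 2"

(* unnormalised weight of sigma_c rho sigma_c in the branch channel (Kraus ops are Pauli multiples) *)
definition branch_weight :: "complex mat list \<Rightarrow> nat \<Rightarrow> real" where
  "branch_weight Ks c = (\<Sum>K\<leftarrow>Ks. (cmod (pauli_coeff c K))\<^sup>2)"

definition branch_prob :: "complex mat list \<Rightarrow> real" where
  "branch_prob Ks = (\<Sum>c<4. branch_weight Ks c)"

definition plogp :: "real \<Rightarrow> real" where
  "plogp x = (if x = 0 then 0 else x * log 2 x)"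

(* entanglement-assisted capacity of the Pauli channel with probabilities r_0..r_3 *)
definition CE_pauli :: "(nat \<Rightarrow> real) \<Rightarrow> real" where
  "CE_pauli r = 2 + (\<Sum>i<4. plogp (r i))"

definition CEQ :: "complex mat list \<Rightarrow> complex mat list \<Rightarrow> real" where
  "CEQ Ds Es =
     (let Kp = branch_kraus 1 Ds Es; Km = branch_kraus (-1) Ds Es;
          pp = branch_prob Kp; pm = branch_prob Km
      in pp * CE_pauli (\<lambda>c. branch_weight Kp c / pp)
       + pm * CE_pauli (\<lambda>c. branch_weight Km c / pm))"

definition bin_entropy :: "real \<Rightarrow> real" where
  "bin_entropy a = - plogp a - plogp (1 - a)"

end

theory Submission
  imports Defs
begin
abbreviation M2 :: "complex \<Rightarrow> complex \<Rightarrow> complex \<Rightarrow> complex \<Rightarrow> complex mat" where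
 "M2 a b c d \<equiv> mat_of_rows_list 2 [[a,b],[c,d]]"
lemma M2_idx: "i < 2 \<Longrightarrow> j < 2 \<Longrightarrow> M2 a b c d $$ (i,j) = (if i = 0 then (if j = 0 then a else b) else (if j = 0 then c else d))"
  by (auto simp: mat_of_rows_list_def less_2_cases_iff)
lemma M2_dim[simp]: "dim_row (M2 a b c d) = 2" "dim_col (M2 a b c d) = 2"
  by (auto simp: mat_of_rows_list_def)
lemma sum2: "(\<Sum>i = 0..<2. f i) = f 0 + f (1::nat)" by (simp add: numeral_2_eq_2)
lemma M2_mult[simp]: "M2 a b c d * M2 e f g h = M2 (a*e+b*g) (a*f+b*h) (c*e+d*g) (c*f+d*h)"
  by (rule eq_matI) (auto simp: M2_idx less_2_cases_iff scalar_prod_def row_def col_def sum2)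
lemma M2_smult[simp]: "x \<cdot>\<^sub>m M2 a b c d = M2 (x*a) (x*b) (x*c) (x*d)"
  by (rule eq_matI) (auto simp: M2_idx less_2_cases_iff)
lemma M2_add[simp]: "M2 a b c d + M2 e f g h = M2 (a+e) (b+f) (c+g) (d+h)"
  by (rule eq_matI) (auto simp: M2_idx less_2_cases_iff)
lemma M2_tr[simp]: "mat_trace2 (M2 a b c d) = a + d"
  by (simp add: mat_trace2_def M2_idx)
lemma pauli_M2: "pauli 0 = M2 1 0 0 1" "pauli 1 = M2 0 1 1 0" "pauli 2 = M2 0 (-\<i>) \<i> 0" "pauli 3 = M2 1 0 0 (-1)"
  by (simp_all add: numeral_eq_Suc)
lemma plogp_div:
  assumes "x \<ge> 0" "P > 0"
  shows "P * plogp (x / P) = plogp x - x * log 2 P"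
proof (cases "x = 0")
  case False
  then have "x > 0" using assms by simp
  then show ?thesis using assms by (simp add: plogp_def log_divide algebra_simps)
qed (simp add: plogp_def)

lemma CE_scaled:
  assumes w: "\<And>c. w c \<ge> 0" and P: "P = (\<Sum>c<4. w c)"
  shows "P * CE_pauli (\<lambda>c. w c / P) = 2 * P + (\<Sum>c<4. plogp (w c)) - plogp P"
proof (cases "P = 0")
  case True
  then have "\<forall>c\<in>{..<4}. w c = 0" using P w by (simp add: sum_nonneg_eq_0_iff)
  then show ?thesis using True by (simp add: plogp_def)
next
  case False
  then have Ppos: "P > 0" using P w by (metis less_eq_real_def sum_nonneg)
  have "P * CE_pauli (\<lambda>c. w c / P) = 2 * P + (\<Sum>c<4. P * plogp (w c / P))"
    by (simp add: CE_pauli_def algebra_simps sum_distrib_left)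
  also have "\<dots> = 2 * P + (\<Sum>c<4. plogp (w c) - w c * log 2 P)"
    using plogp_div[OF w Ppos] by simp
  also have "\<dots> = 2 * P + (\<Sum>c<4. plogp (w c)) - P * log 2 P"
    by (simp add: sum_subtractf P sum_distrib_right)
  finally show ?thesis using Ppos by (simp add: plogp_def)
qed

lemma weights:
  fixes p q :: real
  assumes "0 \<le> p" "p \<le> 1" "0 \<le> q" "q \<le> 1"
  shows "branch_weight (branch_kraus 1 (bitflip_kraus p) (phaseflip_kraus q)) 0 = (1-p)*(1-q)"
    "branch_weight (branch_kraus 1 (bitflip_kraus p) (phaseflip_kraus q)) 1 = p*(1-q)"
    "branch_weight (branch_kraus 1 (bitflip_kraus p) (phaseflip_kraus q)) 2 = 0"
    "branch_weight (branch_kraus 1 (bitflip_kraus p) (phaseflip_kraus q)) 3 = (1-p)*q"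
    "branch_weight (branch_kraus (-1) (bitflip_kraus p) (phaseflip_kraus q)) 0 = 0"
    "branch_weight (branch_kraus (-1) (bitflip_kraus p) (phaseflip_kraus q)) 1 = 0"
    "branch_weight (branch_kraus (-1) (bitflip_kraus p) (phaseflip_kraus q)) 2 = p*q"
    "branch_weight (branch_kraus (-1) (bitflip_kraus p) (phaseflip_kraus q)) 3 = 0"
  using assms
  by (simp_all add: branch_weight_def branch_kraus_def bitflip_kraus_def phaseflip_kraus_def pauli_M2 pauli_coeff_def
     norm_mult power_mult_distrib real_sqrt_mult[symmetric])

theorem corollary2:
  fixes p q :: real
  assumes "0 \<le> p" "p \<le> 1" "0 \<le> q" "q \<le> 1"
  shows "CEQ (bitflip_kraus p) (phaseflip_kraus q) =
           2 + bin_entropy (1 - p * q)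
           + plogp ((1 - p) * (1 - q)) + plogp (p * (1 - q))
           + plogp ((1 - p) * q) + plogp (p * q)"
proof -
  let ?Kp = "branch_kraus 1 (bitflip_kraus p) (phaseflip_kraus q)"
  let ?Km = "branch_kraus (-1) (bitflip_kraus p) (phaseflip_kraus q)"
  note W = weights[OF assms]
  have nn: "\<And>K c. branch_weight K c \<ge> 0" unfolding branch_weight_def by (rule sum_list_nonneg) auto
  have sum4: "\<And>f. (\<Sum>c<(4::nat). f c) = f 0 + f 1 + f 2 + (f 3 :: real)"
    by (simp add: numeral_eq_Suc)
  have pp: "branch_prob ?Kp = 1 - p*q" unfolding branch_prob_def sum4 W by (simp add: algebra_simps)
  have pm: "branch_prob ?Km = p*q" unfolding branch_prob_def sum4 W by simp
  have sp: "(\<Sum>c<4. plogp (branch_weight ?Kp c)) = plogp ((1 - p) * (1 - q)) + plogp (p * (1 - q)) + plogp ((1 - p) * q)"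
    unfolding sum4 W by (simp add: plogp_def)
  have sm: "(\<Sum>c<4. plogp (branch_weight ?Km c)) = plogp (p * q)"
    unfolding sum4 W by (simp add: plogp_def)
  have A: "branch_prob ?Kp * CE_pauli (\<lambda>c. branch_weight ?Kp c / branch_prob ?Kp)
     = 2 * (1-p*q) + plogp ((1 - p) * (1 - q)) + plogp (p * (1 - q)) + plogp ((1 - p) * q) - plogp (1 - p*q)"
    using CE_scaled[of "branch_weight ?Kp" "branch_prob ?Kp", OF nn branch_prob_def] unfolding pp sp by simp
  have B: "branch_prob ?Km * CE_pauli (\<lambda>c. branch_weight ?Km c / branch_prob ?Km)
     = 2 * (p*q) + plogp (p*q) - plogp (p*q)"
    using CE_scaled[of "branch_weight ?Km" "branch_prob ?Km", OF nn branch_prob_def] unfolding pm sm by simp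
  show ?thesis unfolding CEQ_def Let_def A B bin_entropy_def by (simp add: algebra_simps)
qed
end
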